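(* Let $\mathcal{S}_1,\dots,\mathcal{S}_n\subseteq\mathbb{R}^D$ be independent linear subspaces (i.e. $\sum_{\ell=1}^n d_\ell=\dim(\sum_\ell\mathcal{S}_\ell)$, $d_\ell=\dim\mathcal{S}_\ell$), and let $\mathcal{X}=\{\boldsymbol{x}_1,\dots,\boldsymbol{x}_N\}\subseteq\bigcup_\ell\mathcal{S}_\ell$ consist of unit-norm vectors such that each $\mathcal{S}_\ell$ contains at least $d_\ell$ points of $\mathcal{X}$ spanning $\mathcal{S}_\ell$. For every integer $k\ge\sum_{\ell=1}^n d_\ell$, any $\mathcal{X}_0^*\in\arg\min_{\mathcal{X}_0\subseteq\mathcal{X},|\mathcal{X}_0|\le k}F_\infty(\mathcal{X}_0)$ contains at least $d_\ell$ linearly independent points from each $\mathcal{S}_\ell$. Moreover, with $\mathcal{X}_0=\mathcal{X}_0^*$, the problem defining $f_\infty(\boldsymbol{x}_j,\mathcal{X}_0^* )$ is feasible for every $\boldsymbol{x}_j\in\mathcal{X}$ and all of its optimal solutions are subspace-preserving.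
   Context: For $\mathcal{X}_0\subseteq\mathcal{X}$ and $\boldsymbol{x}_j\in\mathcal{X}$, $f_\infty(\boldsymbol{x}_j,\mathcal{X}_0):=\min_{\boldsymbol{c}\in\mathbb{R}^N}\|\boldsymbol{c}\|_1$ subject to $\boldsymbol{x}_j=\sum_{i:\boldsymbol{x}_i\in\mathcal{X}_0}c_i\boldsymbol{x}_i$, with $f_\infty(\boldsymbol{x}_j,\mathcal{X}_0):=\infty$ if infeasible; $F_\infty(\mathcal{X}_0):=\sup_{\boldsymbol{x}_j\in\mathcal{X}}f_\infty(\boldsymbol{x}_j,\mathcal{X}_0)$. A vector $\boldsymbol{c}\in\mathbb{R}^N$ associated with $\boldsymbol{x}_j$ is subspace-preserving if $c_i\neq0$ implies that $\boldsymbol{x}_i$ and $\boldsymbol{x}_j$ lie in the same subspace $\mathcal{S}_\ell$. *)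

theory Defs
  imports "HOL-Analysis.Analysis"
begin

text \<open>Data X = {x_0,...,x_(N-1)} given by an indexing x :: nat => real^'d.
  A coefficient vector c in R^N is a function nat => real vanishing outside {..<N}.\<close>

definition feas_set ::
  "(nat \<Rightarrow> real^'d) \<Rightarrow> nat \<Rightarrow> (real^'d) set \<Rightarrow> nat \<Rightarrow> (nat \<Rightarrow> real) set" where
  "feas_set x N X0 j =
     {c. (\<forall>i. N \<le> i \<longrightarrow> c i = 0) \<and>
         x j = (\<Sum>i\<in>{i. i < N \<and> x i \<in> X0}. c i *\<^sub>R x i)}"

definition l1norm :: "nat \<Rightarrow> (nat \<Rightarrow> real) \<Rightarrow> real" where
  "l1norm N c = (\<Sum>i<N. \<bar>c i\<bar>)"

text \<open>f_infinity(x_j, X0): infimum of the l1 norm over feasible c; equals \<infinity> if infeasible.\<close>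
definition f_inf :: "(nat \<Rightarrow> real^'d) \<Rightarrow> nat \<Rightarrow> (real^'d) set \<Rightarrow> nat \<Rightarrow> ereal" where
  "f_inf x N X0 j = (INF c\<in>feas_set x N X0 j. ereal (l1norm N c))"

definition F_inf :: "(nat \<Rightarrow> real^'d) \<Rightarrow> nat \<Rightarrow> (real^'d) set \<Rightarrow> ereal" where
  "F_inf x N X0 = (SUP j\<in>{..<N}. f_inf x N X0 j)"

definition subspace_preserving ::
  "(nat \<Rightarrow> (real^'d) set) \<Rightarrow> nat \<Rightarrow> (nat \<Rightarrow> real^'d) \<Rightarrow> nat \<Rightarrow> nat \<Rightarrow> (nat \<Rightarrow> real) \<Rightarrow> bool" where
  "subspace_preserving S n x N j c =
     (\<forall>i<N. c i \<noteq> 0 \<longrightarrow> (\<exists>l<n. x i \<in> S l \<and> x j \<in> S l))"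

end

theory Submission imports Defs begin

lemma dim_Un_le: "dim ((A::(real^'d) set) \<union> B) \<le> dim A + dim B"
proof -
  obtain BA where BA: "BA \<subseteq> A" "independent BA" "A \<subseteq> span BA" "card BA = dim A"
    using basis_exists by blast
  obtain BB where BB: "BB \<subseteq> B" "independent BB" "B \<subseteq> span BB" "card BB = dim B"
    using basis_exists by blast
  have "A \<union> B \<subseteq> span (BA \<union> BB)"
    using BA BB span_mono[of BA "BA \<union> BB"] span_mono[of BB "BA \<union> BB"] by blast
  moreover have "finite (BA \<union> BB)" using BA BB finiteI_independent by blast
  ultimately have "dim (A \<union> B) \<le> card (BA \<union> BB)" by (rule dim_le_card)
  also have "\<dots> \<le> card BA + card BB" by (rule card_Un_le)
  finally show ?thesis using BA BB by simp
qed

lemma dim_UN_le: "finite I \<Longrightarrow> dim (\<Union>i\<in>I. (A i :: (real^'d) set)) \<le> (\<Sum>i\<in>I. dim (A i))"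
proof (induction I rule: finite_induct)
  case empty then show ?case by simp
next
  case (insert a I)
  have "dim (\<Union>i\<in>insert a I. A i) = dim (A a \<union> (\<Union>i\<in>I. A i))" by simp
  also have "\<dots> \<le> dim (A a) + dim (\<Union>i\<in>I. A i)" by (rule dim_Un_le)
  also have "\<dots> \<le> dim (A a) + (\<Sum>i\<in>I. dim (A i))" using insert by simp
  finally show ?case using insert by simp
qed

lemma indep_cap:
  fixes S :: "nat \<Rightarrow> (real^'d) set"
  assumes subsp: "\<forall>l<n. subspace (S l)"
    and ind: "(\<Sum>l<n. dim (S l)) = dim (span (\<Union>l<n. S l))"
    and l: "l < n" and v1: "v \<in> S l" and v2: "v \<in> span (\<Union>m\<in>{..<n}-{l}. S m)"
  shows "v = 0"
proof -
  define T where "T = span (\<Union>m\<in>{..<n}-{l}. S m)"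
  have sT: "subspace T" unfolding T_def by simp
  have sS: "subspace (S l)" using subsp l by simp
  have U: "(\<Union>l<n. S l) = S l \<union> (\<Union>m\<in>{..<n}-{l}. S m)" using l by auto
  have "span (\<Union>l<n. S l) = span (S l \<union> T)"
  proof
    show "span (\<Union>l<n. S l) \<subseteq> span (S l \<union> T)"
      unfolding U T_def using span_superset[of "\<Union>m\<in>{..<n}-{l}. S m"] by (intro span_mono) blast
    have "S l \<union> T \<subseteq> span (\<Union>l<n. S l)"
      unfolding U T_def using span_mono[of "\<Union>m\<in>{..<n}-{l}. S m" "S l \<union> (\<Union>m\<in>{..<n}-{l}. S m)"]
        span_superset[of "S l \<union> (\<Union>m\<in>{..<n}-{l}. S m)"] by blast
    then show "span (S l \<union> T) \<subseteq> span (\<Union>l<n. S l)"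
      by (intro span_minimal) auto
  qed
  also have "\<dots> = {x + y |x y. x \<in> S l \<and> y \<in> T}"
    proof -
    have a: "span (S l) = S l" using sS by (simp add: span_eq_iff)
    have b: "span T = T" using sT by (simp add: span_eq_iff)
    show ?thesis unfolding span_Un a b ..
  qed
  finally have E: "span (\<Union>l<n. S l) = {x + y |x y. x \<in> S l \<and> y \<in> T}" .
  have "dim T \<le> (\<Sum>m\<in>{..<n}-{l}. dim (S m))"
    unfolding T_def dim_span by (rule dim_UN_le) simp
  moreover have "(\<Sum>l<n. dim (S l)) = dim (S l) + (\<Sum>m\<in>{..<n}-{l}. dim (S m))"
    using l by (simp add: sum.remove)
  moreover have "dim {x + y |x y. x \<in> S l \<and> y \<in> T} + dim (S l \<inter> T) = dim (S l) + dim T"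
    using dim_sums_Int[OF sS sT] .
  moreover have "dim {x + y |x y. x \<in> S l \<and> y \<in> T} = (\<Sum>l<n. dim (S l))" using ind E by simp
  ultimately have "dim (S l \<inter> T) = 0" by linarith
  then have "S l \<inter> T \<subseteq> {0}" by simp
  then show ?thesis using v1 v2 T_def by blast
qed


lemma decomp:
  fixes S :: "nat \<Rightarrow> (real^'d) set" and g :: "'i \<Rightarrow> real^'d"
  assumes subsp: "\<forall>l<n. subspace (S l)"
    and ind: "(\<Sum>l<n. dim (S l)) = dim (span (\<Union>l<n. S l))"
    and l: "l < n" and J: "finite J" and gJ: "\<forall>i\<in>J. g i \<in> (\<Union>m<n. S m)"
    and inS: "(\<Sum>i\<in>J. u i *\<^sub>R g i) \<in> S l"
  shows "(\<Sum>i\<in>J. u i *\<^sub>R g i) = (\<Sum>i\<in>J \<inter> {i. g i \<in> S l}. u i *\<^sub>R g i)"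
proof -
  define A where "A = (\<Sum>i\<in>J \<inter> {i. g i \<in> S l}. u i *\<^sub>R g i)"
  define B where "B = (\<Sum>i\<in>J - {i. g i \<in> S l}. u i *\<^sub>R g i)"
  have AB: "(\<Sum>i\<in>J. u i *\<^sub>R g i) = A + B" unfolding A_def B_def using J by (rule sum.Int_Diff)
  have sS: "subspace (S l)" using subsp l by simp
  have A: "A \<in> S l" unfolding A_def
    by (rule subspace_sum[OF sS]) (auto intro: subspace_scale[OF sS])
  have B1: "B \<in> S l" using AB A inS subspace_diff[OF sS, of "A + B" A] by simp
  have B2: "B \<in> span (\<Union>m\<in>{..<n}-{l}. S m)" unfolding B_def
  proof (rule span_sum, rule span_mul)
    fix i assume i: "i \<in> J - {i. g i \<in> S l}"
    then obtain m where "m < n" "g i \<in> S m" using gJ by auto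
    moreover have "m \<noteq> l" using i \<open>g i \<in> S m\<close> by auto
    ultimately show "g i \<in> span (\<Union>m\<in>{..<n}-{l}. S m)" by (intro span_base) auto
  qed
  have "B = 0" using indep_cap[OF subsp ind l B1 B2] .
  then show ?thesis using AB A_def by simp
qed

lemma feas_of_span:
  fixes x :: "nat \<Rightarrow> real^'d"
  assumes X0: "X0 \<subseteq> x ` {..<N}" and inj: "inj_on x {..<N}" and sp: "x j \<in> span X0"
  shows "feas_set x N X0 j \<noteq> {}"
proof -
  have fin: "finite X0" using X0 finite_subset by blast
  obtain u where u: "x j = (\<Sum>v\<in>X0. u v *\<^sub>R v)" using sp span_finite[OF fin] by auto
  define I where "I = {i. i < N \<and> x i \<in> X0}"
  define c where "c i = (if i < N \<and> x i \<in> X0 then u (x i) else 0)" for i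
  have injI: "inj_on x I" using inj unfolding I_def by (rule inj_on_subset) auto
  have img: "x ` I = X0" using X0 unfolding I_def by auto
  have "(\<Sum>i\<in>I. c i *\<^sub>R x i) = (\<Sum>i\<in>I. u (x i) *\<^sub>R x i)"
    unfolding c_def I_def by (rule sum.cong) auto
  also have "\<dots> = (\<Sum>v\<in>x ` I. u v *\<^sub>R v)" using sum.reindex[OF injI, of "\<lambda>v. u v *\<^sub>R v"] by simp
  also have "\<dots> = x j" using img u by simp
  finally have "c \<in> feas_set x N X0 j" unfolding feas_set_def I_def c_def by auto
  then show ?thesis by blast
qed

lemma span_of_feas:
  assumes "c \<in> feas_set x N X0 j"
  shows "x j \<in> span X0"
proof -
  have e: "x j = (\<Sum>i\<in>{i. i < N \<and> x i \<in> X0}. c i *\<^sub>R x i)" using assms unfolding feas_set_def by auto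
  show ?thesis unfolding e by (intro span_sum span_mul span_base) auto
qed

lemma F_fin:
  assumes "\<forall>j<N. feas_set x N X0 j \<noteq> {}"
  shows "F_inf x N X0 < \<infinity>"
proof (cases "N = 0")
  case True then show ?thesis by (simp add: F_inf_def bot_ereal_def)
next
  case False
  have "\<forall>j<N. f_inf x N X0 j < \<infinity>"
  proof (intro allI impI)
    fix j assume "j < N"
    then obtain c where c: "c \<in> feas_set x N X0 j" using assms by blast
    have "f_inf x N X0 j \<le> ereal (l1norm N c)" unfolding f_inf_def using c by (rule INF_lower)
    then show "f_inf x N X0 j < \<infinity>" using le_less_trans[of _ "ereal (l1norm N c)" \<infinity>] by simp
  qed
  then show ?thesis unfolding F_inf_def using False
    by (subst finite_Sup_less_iff) auto
qed

lemma feas_of_F: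
  assumes "F_inf x N X0 < \<infinity>" "j < N"
  shows "feas_set x N X0 j \<noteq> {}"
proof
  assume e: "feas_set x N X0 j = {}"
  have "f_inf x N X0 j \<le> F_inf x N X0" unfolding F_inf_def using assms(2) by (intro SUP_upper) auto
  moreover have "f_inf x N X0 j = \<infinity>" unfolding f_inf_def e by (simp add: top_ereal_def)
  ultimately show False using assms(1) by simp
qed

theorem theorem1:
  fixes S :: "nat \<Rightarrow> (real^'d) set" and n :: nat
    and x :: "nat \<Rightarrow> real^'d" and N :: nat
    and k :: nat and X0s :: "(real^'d) set"
  assumes subsp: "\<forall>l<n. subspace (S l)"
    and indep_subsp: "(\<Sum>l<n. dim (S l)) = dim (span (\<Union>l<n. S l))"
    and distinct_pts: "inj_on x {..<N}"
    and in_union: "\<forall>j<N. x j \<in> (\<Union>l<n. S l)"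
    and unit: "\<forall>j<N. norm (x j) = 1"
    and spanning: "\<forall>l<n. \<exists>A. A \<subseteq> S l \<inter> x ` {..<N} \<and> card A \<ge> dim (S l) \<and> span A = S l"
    and k_ge: "k \<ge> (\<Sum>l<n. dim (S l))"
    and X0s_sub: "X0s \<subseteq> x ` {..<N}"
    and X0s_card: "card X0s \<le> k"
    and X0s_min: "\<forall>X0. X0 \<subseteq> x ` {..<N} \<and> card X0 \<le> k \<longrightarrow> F_inf x N X0s \<le> F_inf x N X0"
  shows "(\<forall>l<n. \<exists>A. A \<subseteq> X0s \<inter> S l \<and> card A \<ge> dim (S l) \<and> independent A)
       \<and> (\<forall>j<N. feas_set x N X0s j \<noteq> {} \<and>
            (\<forall>c\<in>feas_set x N X0s j. ereal (l1norm N c) = f_inf x N X0s j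
                 \<longrightarrow> subspace_preserving S n x N j c))"
proof -
  have sepv: "x i \<notin> S m" if "i < N" "l < n" "m < n" "l \<noteq> m" "x i \<in> S l" for i l m
  proof
    assume "x i \<in> S m"
    moreover have "S m \<subseteq> span (\<Union>m\<in>{..<n}-{l}. S m)" using that by (intro subset_trans[OF _ span_superset]) auto
    ultimately have "x i = 0" using indep_cap[OF subsp indep_subsp \<open>l < n\<close> \<open>x i \<in> S l\<close>] by blast
    then show False using unit that by auto
  qed
  have "\<forall>l<n. \<exists>B. B \<subseteq> S l \<inter> x ` {..<N} \<and> span B = S l \<and> card B = dim (S l)"
  proof (intro allI impI)
    fix l assume l: "l < n"
    obtain A where A: "A \<subseteq> S l \<inter> x ` {..<N}" "span A = S l" using spanning l by blast
    obtain B where B: "B \<subseteq> A" "independent B" "A \<subseteq> span B" "card B = dim A" using basis_exists by blast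
    have "span B \<subseteq> S l" using span_mono[OF B(1)] A by simp
    moreover have "S l \<subseteq> span B" using A(2) span_mono[OF B(3)] by (simp add: span_span)
    ultimately have "span B = S l" by blast
    moreover have "dim A = dim (S l)" using A(2) dim_span[of A] by simp
    ultimately show "\<exists>B. B \<subseteq> S l \<inter> x ` {..<N} \<and> span B = S l \<and> card B = dim (S l)"
      using A B by (intro exI[of _ B]) auto
  qed
  then obtain B where B: "\<And>l. l < n \<Longrightarrow> B l \<subseteq> S l \<inter> x ` {..<N} \<and> span (B l) = S l \<and> card (B l) = dim (S l)"
    by metis
  define X0 where "X0 = (\<Union>l<n. B l)"
  have X0sub: "X0 \<subseteq> x ` {..<N}" unfolding X0_def using B by blast
  have "card X0 \<le> (\<Sum>l<n. card (B l))" unfolding X0_def by (rule card_UN_le) simp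
  also have "\<dots> = (\<Sum>l<n. dim (S l))" using B by simp
  finally have X0card: "card X0 \<le> k" using k_ge by simp
  have "\<forall>j<N. x j \<in> span X0"
  proof (intro allI impI)
    fix j assume "j < N"
    then obtain l where l: "l < n" "x j \<in> S l" using in_union by auto
    then have "x j \<in> span (B l)" using B by simp
    moreover have "span (B l) \<subseteq> span X0" unfolding X0_def using l by (intro span_mono) auto
    ultimately show "x j \<in> span X0" by blast
  qed
  then have "\<forall>j<N. feas_set x N X0 j \<noteq> {}" using feas_of_span[OF X0sub distinct_pts] by blast
  then have "F_inf x N X0 < \<infinity>" by (rule F_fin)
  then have Ffin: "F_inf x N X0s < \<infinity>" using X0s_min X0sub X0card le_less_trans by blast
  have feas: "\<forall>j<N. feas_set x N X0s j \<noteq> {}" using feas_of_F[OF Ffin] by blast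
  have finX: "finite X0s" using X0s_sub finite_subset by blast
  have X0U: "X0s \<subseteq> (\<Union>m<n. S m)" using X0s_sub in_union by blast
  have part1: "\<forall>l<n. \<exists>A. A \<subseteq> X0s \<inter> S l \<and> card A \<ge> dim (S l) \<and> independent A"
  proof (intro allI impI)
    fix l assume l: "l < n"
    have sS: "subspace (S l)" using subsp l by simp
    have Bsub: "B l \<subseteq> span (X0s \<inter> S l)"
    proof
      fix b assume b: "b \<in> B l"
      then obtain j where j: "j < N" "b = x j" "b \<in> S l" using B[OF l] by blast
      then obtain c where "c \<in> feas_set x N X0s j" using feas by blast
      then have "x j \<in> span X0s" by (rule span_of_feas)
      then obtain u where u: "x j = (\<Sum>v\<in>X0s. u v *\<^sub>R v)" using span_finite[OF finX] by auto
      have "(\<Sum>v\<in>X0s. u v *\<^sub>R id v) = (\<Sum>v\<in>X0s \<inter> {v. id v \<in> S l}. u v *\<^sub>R id v)"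
        by (rule decomp[OF subsp indep_subsp l finX]) (use X0U u j in auto)
      then have "x j = (\<Sum>v\<in>X0s \<inter> S l. u v *\<^sub>R v)" using u by (simp add: Int_def)
      also have "\<dots> \<in> span (X0s \<inter> S l)" by (intro span_sum span_mul span_base) auto
      finally show "b \<in> span (X0s \<inter> S l)" using j by simp
    qed
    have "S l = span (B l)" using B[OF l] by simp
    also have "\<dots> \<subseteq> span (span (X0s \<inter> S l))" using Bsub by (rule span_mono)
    also have "\<dots> = span (X0s \<inter> S l)" by (rule span_span)
    finally have "dim (S l) \<le> dim (span (X0s \<inter> S l))" by (rule dim_subset)
    then have "dim (S l) \<le> dim (X0s \<inter> S l)" by (simp only: dim_span)
    moreover obtain A where A: "A \<subseteq> X0s \<inter> S l" "independent A" "X0s \<inter> S l \<subseteq> span A" "card A = dim (X0s \<inter> S l)"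
      by (rule basis_exists)
    ultimately show "\<exists>A. A \<subseteq> X0s \<inter> S l \<and> card A \<ge> dim (S l) \<and> independent A"
      by (intro exI[of _ A]) (simp only: A(1) A(2) A(4) simp_thms)
  qed
  have part2: "\<forall>c\<in>feas_set x N X0s j. ereal (l1norm N c) = f_inf x N X0s j
                 \<longrightarrow> subspace_preserving S n x N j c" if j: "j < N" for j
  proof (intro ballI impI)
    fix c assume c: "c \<in> feas_set x N X0s j" and opt: "ereal (l1norm N c) = f_inf x N X0s j"
    obtain l where l: "l < n" "x j \<in> S l" using in_union j by auto
    show "subspace_preserving S n x N j c" unfolding subspace_preserving_def
    proof (rule ccontr)
      assume "\<not> (\<forall>i<N. c i \<noteq> 0 \<longrightarrow> (\<exists>l<n. x i \<in> S l \<and> x j \<in> S l))"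
      then obtain i0 where i0: "i0 < N" "c i0 \<noteq> 0" "x i0 \<notin> S l" using l by blast
      define I where "I = {i. i < N \<and> x i \<in> X0s}"
      define c' where "c' i = (if i < N \<and> x i \<in> X0s \<and> x i \<in> S l then c i else 0)" for i
      have finI: "finite I" unfolding I_def by simp
      have c0: "\<forall>i. N \<le> i \<longrightarrow> c i = 0" and cs: "x j = (\<Sum>i\<in>I. c i *\<^sub>R x i)"
        using c unfolding feas_set_def I_def by auto
      have "(\<Sum>i\<in>I. c i *\<^sub>R x i) = (\<Sum>i\<in>I \<inter> {i. x i \<in> S l}. c i *\<^sub>R x i)"
        by (rule decomp[OF subsp indep_subsp l(1) finI]) (use in_union cs l in \<open>auto simp: I_def\<close>)
      also have "\<dots> = (\<Sum>i\<in>I. c' i *\<^sub>R x i)"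
        by (rule sum.mono_neutral_cong_left) (use finI in \<open>auto simp: c'_def I_def\<close>)
      finally have "c' \<in> feas_set x N X0s j" using cs unfolding feas_set_def I_def c'_def by auto
      then have "f_inf x N X0s j \<le> ereal (l1norm N c')" unfolding f_inf_def by (rule INF_lower)
      moreover have "l1norm N c' < l1norm N c" unfolding l1norm_def
        by (rule sum_strict_mono_ex1) (use i0 in \<open>auto simp: c'_def\<close>)
      ultimately have "ereal (l1norm N c) \<le> ereal (l1norm N c')" "l1norm N c' < l1norm N c"
        using opt by simp_all
      then show False by simp
    qed
  qed
  show ?thesis using part1 part2 feas by blast
qed

end
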